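(* Let $n\geq1$. For all $a,r\in\mathbb N$ and all $l\in\mathbb N$ with $l\leq n$, $$\sum_{i=0}^l(-1)^i\binom{l}{i}\sum_{j=0}^{n-l+1}(-1)^{n-l+1+j}\binom{n-l+1}{j}\overline{(r+i+j,\,a+r+j)}=\bar0.$$
   Context: $\Lambda_{2,n}=\{\alpha\in\mathbb N^2:1\leq\alpha_1+\alpha_2\leq n\}$, $\lambda_{2,n}=|\Lambda_{2,n}|$, and for $v\in\mathbb N^2$, $\bar v=\big(\binom{v_1}{\alpha_1}\binom{v_2}{\alpha_2}\big)_{\alpha\in\Lambda_{2,n}}\in\mathbb C^{\lambda_{2,n}}$; $\bar0$ is the zero vector. *)

theory Defs
  imports Complex_Main "HOL-Library.Function_Algebras"
begin

definition Lambda2 :: "nat \<Rightarrow> (nat \<times> nat) set" where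
  "Lambda2 n = {\<alpha>. 1 \<le> fst \<alpha> + snd \<alpha> \<and> fst \<alpha> + snd \<alpha> \<le> n}"

text \<open>The vector bar v in C^{Lambda_{2,n}}, represented as a function on N^2
  which is zero outside Lambda_{2,n}; the zero vector is the constant 0 function.\<close>
definition vbar :: "nat \<Rightarrow> nat \<times> nat \<Rightarrow> (nat \<times> nat \<Rightarrow> complex)" where
  "vbar n v = (\<lambda>\<alpha>. if \<alpha> \<in> Lambda2 n
      then of_nat (fst v choose fst \<alpha>) * of_nat (snd v choose snd \<alpha>) else 0)"

end

theory Submission imports Defs "HOL-Computational_Algebra.Polynomial" begin

lemma sum_fun_apply': "(sum f A) x = sum (\<lambda>a. f a x) A"
  by (induction A rule: infinite_finite_induct) auto

definition S :: "nat \<Rightarrow> (nat \<Rightarrow> complex) \<Rightarrow> complex" where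
  "S m g = (\<Sum>j\<le>m. (-1)^j * of_nat (m choose j) * g j)"

lemma S_Suc: "S (Suc m) g = S m (\<lambda>j. g j - g (Suc j))"
proof -
  have "S (Suc m) g = g 0 + (\<Sum>j\<le>m. (-1)^(Suc j) * of_nat (Suc m choose Suc j) * g (Suc j))"
    unfolding S_def by (subst sum.atMost_Suc_shift) simp
  also have "\<dots> = g 0 - (\<Sum>j\<le>m. (-1)^j * of_nat (m choose j) * g (Suc j))
                 - (\<Sum>j\<le>m. (-1)^j * of_nat (m choose Suc j) * g (Suc j))"
    by (simp add: sum_subtractf[symmetric] sum_negf[symmetric] sum.distrib[symmetric] algebra_simps)
  also have "(\<Sum>j\<le>m. (-1)^j * of_nat (m choose Suc j) * g (Suc j)) =
      - ((\<Sum>j\<le>Suc m. (-1)^j * of_nat (m choose j) * g j) - g 0)"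
    by (subst sum.atMost_Suc_shift) (simp add: sum_negf[symmetric])
  also have "(\<Sum>j\<le>Suc m. (-1)^j * of_nat (m choose j) * g j) = (\<Sum>j\<le>m. (-1)^j * of_nat (m choose j) * g j)"
    by simp
  finally show ?thesis unfolding S_def by (simp add: sum_subtractf[symmetric] algebra_simps)
qed

lemma degree_shift_diff:
  fixes p :: "complex poly"
  shows "degree (p - pcompose p [:1,1:]) < degree p \<or> p - pcompose p [:1,1:] = 0"
proof (cases "degree p = 0")
  case True
  then obtain c where "p = [:c:]" by (metis degree_eq_zeroE)
  then show ?thesis by simp
next
  case False
  have d: "degree (pcompose p [:1,1:]) = degree p" by (simp add: degree_pcompose)
  have l: "lead_coeff (pcompose p [:1,1:]) = lead_coeff p" by (simp add: lead_coeff_comp)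
  have le: "degree (p - pcompose p [:1,1:]) \<le> degree p" using degree_diff_le[of p "degree p"] d by simp
  have "coeff (p - pcompose p [:1,1:]) (degree p) = 0" using d l by simp
  then have "degree (p - pcompose p [:1,1:]) \<noteq> degree p \<or> p - pcompose p [:1,1:] = 0"
    by (metis leading_coeff_0_iff)
  then show ?thesis using le by auto
qed

lemma S_poly: "degree p < m \<Longrightarrow> S m (\<lambda>j. poly p (of_nat j)) = 0"
proof (induction m arbitrary: p)
  case 0 then show ?case by simp
next
  case (Suc m)
  let ?q = "p - pcompose p [:1,1:]"
  have eq: "(\<lambda>j. poly p (of_nat j) - poly p (of_nat (Suc j))) = (\<lambda>j. poly ?q (of_nat j))"
    by (simp add: poly_pcompose algebra_simps)
  show ?case
  proof (cases "?q = 0")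
    case True
    then show ?thesis unfolding S_Suc eq by (simp add: S_def)
  next
    case False
    then have "degree ?q < m" using degree_shift_diff[of p] Suc.prems by auto
    then show ?thesis unfolding S_Suc eq using Suc.IH by blast
  qed
qed

definition P :: "nat \<Rightarrow> nat \<Rightarrow> complex poly" where
  "P c k = smult (1 / fact k) (\<Prod>i<k. [:of_nat c - of_nat i, 1:])"

lemma degree_P: "degree (P c k) = k"
  unfolding P_def by (simp add: degree_prod_eq_sum_degree)

lemma poly_P: "poly (P c k) (of_nat j) = of_nat ((c + j) choose k)"
  unfolding P_def binomial_gbinomial gbinomial_prod_rev
  by (simp add: poly_prod atLeast0LessThan algebra_simps)

lemma lemB: "(\<Sum>i\<le>l. (-1)^i * of_nat (l choose i) * of_nat (i choose k) :: complex)
   = (if k = l then (-1)^l else 0)"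
proof (cases "k < l")
  case True
  have "S l (\<lambda>j. poly (P 0 k) (of_nat j)) = 0" by (rule S_poly) (simp add: degree_P True)
  then show ?thesis using True by (simp add: S_def poly_P)
next
  case False
  have z: "(\<Sum>i<l. (-1)^i * of_nat (l choose i) * of_nat (i choose k) :: complex) = 0"
    using False by (intro sum.neutral) auto
  show ?thesis using False by (simp add: lessThan_Suc_atMost[symmetric] z)
qed

lemma lemA: "(\<Sum>i\<le>l. (-1)^i * of_nat (l choose i) * of_nat ((c + i) choose u) :: complex)
   = (if l \<le> u then (-1)^l * of_nat (c choose (u - l)) else 0)"
proof -
  have "(\<Sum>i\<le>l. (-1)^i * of_nat (l choose i) * of_nat ((c + i) choose u) :: complex)
     = (\<Sum>i\<le>l. \<Sum>k\<le>u. (-1)^i * of_nat (l choose i) * of_nat (i choose k) * of_nat (c choose (u - k)))"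
  proof (intro sum.cong refl)
    fix i
    have v: "(of_nat ((c + i) choose u) :: complex) = (\<Sum>k\<le>u. of_nat (i choose k) * of_nat (c choose (u - k)))"
    proof -
      have "(c + i) choose u = (\<Sum>k\<le>u. (i choose k) * (c choose (u - k)))"
        using vandermonde[of i c u] by (simp add: add.commute)
      then show ?thesis by (simp add: of_nat_sum[symmetric] of_nat_mult[symmetric] del: of_nat_sum of_nat_mult)
    qed
    show "(-1)^i * of_nat (l choose i) * of_nat ((c + i) choose u) =
      (\<Sum>k\<le>u. (-1)^i * of_nat (l choose i) * of_nat (i choose k) * of_nat (c choose (u - k)) :: complex)"
      unfolding v by (simp add: sum_distrib_left mult.assoc)
  qed
  also have "\<dots> = (\<Sum>k\<le>u. of_nat (c choose (u - k)) * (\<Sum>i\<le>l. (-1)^i * of_nat (l choose i) * of_nat (i choose k)))"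
    by (subst sum.swap) (simp add: sum_distrib_left algebra_simps)
  also have "\<dots> = (\<Sum>k\<le>u. if k = l then of_nat (c choose (u - k)) * (-1)^l else 0)"
    by (intro sum.cong refl) (simp add: lemB)
  also have "\<dots> = (if l \<le> u then (-1)^l * of_nat (c choose (u - l)) else 0)"
    by (simp add: sum.delta)
  finally show ?thesis .
qed

theorem corollary2p13:
  fixes n a r l :: nat
  assumes "n \<ge> 1" and "l \<le> n"
  shows "(\<Sum>i=0..l. (\<lambda>\<alpha>. (-1)^i * of_nat (l choose i)) *
           (\<Sum>j=0..n-l+1. (\<lambda>\<alpha>. (-1)^(n-l+1+j) * of_nat ((n-l+1) choose j)) *
              vbar n (r+i+j, a+r+j))) = (0 :: nat \<times> nat \<Rightarrow> complex)"
proof (rule ext)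
  fix \<alpha> :: "nat \<times> nat"
  obtain u v where uv: "\<alpha> = (u, v)" by fastforce
  define m where "m = n - l + 1"
  show "(\<Sum>i=0..l. (\<lambda>\<alpha>. (-1)^i * of_nat (l choose i)) *
           (\<Sum>j=0..n-l+1. (\<lambda>\<alpha>. (-1)^(n-l+1+j) * of_nat ((n-l+1) choose j)) *
              vbar n (r+i+j, a+r+j))) \<alpha> = 0 \<alpha>"
  proof (cases "\<alpha> \<in> Lambda2 n")
    case False
    then show ?thesis by (simp add: sum_fun_apply' vbar_def)
  next
    case True
    then have uvn: "u + v \<le> n" using uv by (simp add: Lambda2_def)
    have "(\<Sum>i=0..l. (\<lambda>\<alpha>. (-1)^i * of_nat (l choose i)) *
           (\<Sum>j=0..n-l+1. (\<lambda>\<alpha>. (-1)^(n-l+1+j) * of_nat ((n-l+1) choose j)) *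
              vbar n (r+i+j, a+r+j))) \<alpha>
      = (\<Sum>i\<le>l. (-1)^i * of_nat (l choose i) * (\<Sum>j\<le>m. (-1)^(m+j) * of_nat (m choose j) *
              (of_nat ((r+j+i) choose u) * of_nat ((a+r+j) choose v))))"
      using True uv by (simp add: sum_fun_apply' vbar_def m_def atLeast0AtMost add_ac)
    also have "\<dots> = (\<Sum>j\<le>m. (-1)^(m+j) * of_nat (m choose j) * of_nat ((a+r+j) choose v) *
        (\<Sum>i\<le>l. (-1)^i * of_nat (l choose i) * of_nat ((r+j+i) choose u)))"
      unfolding sum_distrib_left by (subst sum.swap) (simp add: mult_ac)
    also have "\<dots> = (\<Sum>j\<le>m. (-1)^(m+j) * of_nat (m choose j) * of_nat ((a+r+j) choose v) *
        (if l \<le> u then (-1)^l * of_nat ((r+j) choose (u - l)) else 0))"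
      by (simp only: lemA)
    also have "\<dots> = 0"
    proof (cases "l \<le> u")
      case False then show ?thesis by simp
    next
      case True
      have "degree (P r (u - l) * P (a + r) v) < m"
        using True uvn using degree_mult_le[of "P r (u - l)" "P (a + r) v"] by (simp add: degree_P m_def)
      then have "S m (\<lambda>j. poly (P r (u - l) * P (a + r) v) (of_nat j)) = 0" by (rule S_poly)
      then have "(\<Sum>j\<le>m. (-1)^j * of_nat (m choose j) * (of_nat ((r + j) choose (u - l)) * of_nat ((a + r + j) choose v)) :: complex) = 0"
        by (simp add: S_def poly_P)
      then have "(-1)^(m+l) * (\<Sum>j\<le>m. (-1)^j * of_nat (m choose j) * (of_nat ((r + j) choose (u - l)) * of_nat ((a + r + j) choose v)) :: complex) = 0"
        by simp
      then show ?thesis using True by (simp add: sum_distrib_left power_add algebra_simps)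
    qed
    finally show ?thesis by simp
  qed
qed

end
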